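(* Let $\vec G$ and $\vec H$ be oriented graphs. Then $\vec G$ and $\vec H$ are push-equivalent (i.e. $\vec H$ can be obtained from $\vec G$ by pushing some set of vertices, up to isomorphism) if and only if their anti-twinned graphs $R(\vec G)$ and $R(\vec H)$ are isomorphic as oriented graphs.
   Context: An oriented graph is a directed graph with no loops and no pair of opposite arcs. To push a vertex $v$ of an oriented graph means to reverse the orientation of every arc incident with $v$. Two oriented graphs are push-equivalent if one can be obtained from the other by pushing some set of vertices; this is an equivalence relation, and the equivalence class $[\vec G]$ of $\vec G$ is called a push graph; its elements are called presentations of $[\vec G]$. Given an oriented graph $\vec G$ with vertex set $\{v_1,\dots,v_k\}$, its anti-twinned graph $R(\vec G)$ is the oriented graph with vertex set $\{v_1,\dots,v_k\}\cup\{v_1',\dots,v_k'\}$ (where $v_i'$ are new vertices) and arc set $\{v_iv_j,\ v_i'v_j',\ v_jv_i',\ v_j'v_i : v_iv_j \text{ an arc of } \vec G\}$. (Up to isomorphism $R(\vec G)$ does not depend on which presentation of $[\vec G]$ is used.) An isomorphism of oriented graphs is a bijection $h$ on vertices such that $xy$ is an arc iff $h(x)h(y)$ is an arc. *)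

theory Defs
  imports Main
begin

definition oriented_graph :: "'a set \<Rightarrow> ('a \<times> 'a) set \<Rightarrow> bool" where
  "oriented_graph V A \<longleftrightarrow> A \<subseteq> V \<times> V \<and> (\<forall>x. (x, x) \<notin> A)
     \<and> (\<forall>x y. (x, y) \<in> A \<longrightarrow> (y, x) \<notin> A)"

definition push :: "'a \<Rightarrow> ('a \<times> 'a) set \<Rightarrow> ('a \<times> 'a) set" where
  "push v A = {(x, y). ((x, y) \<in> A \<and> x \<noteq> v \<and> y \<noteq> v) \<or> ((y, x) \<in> A \<and> (x = v \<or> y = v))}"

definition push_related :: "'a set \<Rightarrow> ('a \<times> 'a) set \<Rightarrow> ('a \<times> 'a) set \<Rightarrow> bool" where
  "push_related V A B \<longleftrightarrow> (\<lambda>X Y. \<exists>v\<in>V. Y = push v X)\<^sup>*\<^sup>* A B"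

definition is_iso :: "'a set \<Rightarrow> ('a \<times> 'a) set \<Rightarrow> 'b set \<Rightarrow> ('b \<times> 'b) set \<Rightarrow> ('a \<Rightarrow> 'b) \<Rightarrow> bool" where
  "is_iso V A W B h \<longleftrightarrow> bij_betw h V W \<and>
     (\<forall>x\<in>V. \<forall>y\<in>V. (x, y) \<in> A \<longleftrightarrow> (h x, h y) \<in> B)"

definition isomorphic :: "'a set \<Rightarrow> ('a \<times> 'a) set \<Rightarrow> 'b set \<Rightarrow> ('b \<times> 'b) set \<Rightarrow> bool" where
  "isomorphic V A W B \<longleftrightarrow> (\<exists>h. is_iso V A W B h)"

definition push_equivalent :: "'a set \<Rightarrow> ('a \<times> 'a) set \<Rightarrow> 'b set \<Rightarrow> ('b \<times> 'b) set \<Rightarrow> bool" where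
  "push_equivalent V A W B \<longleftrightarrow> (\<exists>A'. push_related V A A' \<and> isomorphic V A' W B)"

text \<open>Anti-twinned graph: vertex (v, True) stands for v, (v, False) for its twin v'.\<close>
definition anti_twin_vertices :: "'a set \<Rightarrow> ('a \<times> bool) set" where
  "anti_twin_vertices V = V \<times> UNIV"

definition anti_twin_arcs :: "('a \<times> 'a) set \<Rightarrow> (('a \<times> bool) \<times> ('a \<times> bool)) set" where
  "anti_twin_arcs A = (\<Union>(u, v)\<in>A.
      {((u, True), (v, True)), ((u, False), (v, False)),
       ((v, True), (u, False)), ((v, False), (u, True))})"

end

theory Submission
  imports Defs
begin

lemma at_char: "((x,b),(y,c)) \<in> anti_twin_arcs A \<longleftrightarrow> (if b = c then (x,y)\<in>A else (y,x)\<in>A)"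
  by (cases b; cases c; auto simp: anti_twin_arcs_def)

lemma push_iff: "(x,y) \<in> push v A \<longleftrightarrow> (if x = v \<or> y = v then (y,x)\<in>A else (x,y)\<in>A)"
  by (auto simp: push_def)

lemma is_iso_trans: "is_iso V A W B f \<Longrightarrow> is_iso W B X C g \<Longrightarrow> is_iso V A X C (g \<circ> f)"
  unfolding is_iso_def
  apply (intro conjI)
   apply (blast intro: bij_betw_trans)
  apply (metis bij_betw_apply comp_apply)
  done

definition sw :: "'a \<Rightarrow> 'a \<times> bool \<Rightarrow> 'a \<times> bool" where
  "sw v p = (if fst p = v then (fst p, \<not> snd p) else p)"

lemma sw_iso: "is_iso (anti_twin_vertices V) (anti_twin_arcs A) (anti_twin_vertices V) (anti_twin_arcs (push v A)) (sw v)"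
proof -
  have inv: "sw v (sw v p) = p" for p by (auto simp: sw_def)
  have "bij_betw (sw v) (anti_twin_vertices V) (anti_twin_vertices V)"
    by (rule bij_betw_byWitness[where f'="sw v"]) (auto simp: inv sw_def anti_twin_vertices_def)
  moreover have "(p, q) \<in> anti_twin_arcs A \<longleftrightarrow> (sw v p, sw v q) \<in> anti_twin_arcs (push v A)" for p q
    by (cases p; cases q; auto simp: sw_def at_char push_iff)
  ultimately show ?thesis by (auto simp: is_iso_def)
qed

lemma fwd_push:
  assumes "push_related V A A'"
  shows "isomorphic (anti_twin_vertices V) (anti_twin_arcs A) (anti_twin_vertices V) (anti_twin_arcs A')"
  using assms unfolding push_related_def
proof (induction rule: rtranclp_induct)
  case base
  have "is_iso (anti_twin_vertices V) (anti_twin_arcs A) (anti_twin_vertices V) (anti_twin_arcs A) id"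
    by (auto simp: is_iso_def)
  then show ?case by (auto simp: isomorphic_def)
next
  case (step y z)
  then obtain v where z: "z = push v y" by auto
  from step obtain f where "is_iso (anti_twin_vertices V) (anti_twin_arcs A) (anti_twin_vertices V) (anti_twin_arcs y) f"
    by (auto simp: isomorphic_def)
  from is_iso_trans[OF this sw_iso] show ?case unfolding z isomorphic_def by blast
qed

lemma fwd_iso:
  assumes "is_iso V A W B h"
  shows "is_iso (anti_twin_vertices V) (anti_twin_arcs A) (anti_twin_vertices W) (anti_twin_arcs B) (map_prod h id)"
proof -
  have "bij_betw (map_prod h id) (V \<times> UNIV) (W \<times> UNIV)"
    using assms by (intro bij_betw_map_prod) (auto simp: is_iso_def)
  moreover have "((x,b),(y,c)) \<in> anti_twin_arcs A \<longleftrightarrow> ((h x,b),(h y,c)) \<in> anti_twin_arcs B" if "x \<in> V" "y \<in> V" for x y b c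
    using assms that by (auto simp: is_iso_def at_char)
  ultimately show ?thesis by (auto simp: is_iso_def anti_twin_vertices_def)
qed

definition outR :: "('c \<times> 'c) set \<Rightarrow> 'c \<Rightarrow> 'c set" where "outR E p = {q. (p,q) \<in> E}"
definition inR :: "('c \<times> 'c) set \<Rightarrow> 'c \<Rightarrow> 'c set" where "inR E p = {q. (q,p) \<in> E}"
definition tw where "tw E p q \<longleftrightarrow> outR E p = outR E q \<and> inR E p = inR E q"
definition isoR where "isoR E p \<longleftrightarrow> outR E p = {} \<and> inR E p = {}"
definition fl :: "'a \<times> bool \<Rightarrow> 'a \<times> bool" where "fl p = (fst p, \<not> snd p)"

lemma tw_arc: "tw E p p' \<Longrightarrow> tw E q q' \<Longrightarrow> (p,q)\<in>E \<longleftrightarrow> (p',q')\<in>E"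
  unfolding tw_def outR_def inR_def by blast

lemma tw_isoR: "tw E p q \<Longrightarrow> isoR E p \<longleftrightarrow> isoR E q"
  unfolding tw_def isoR_def by simp

lemma out_fl: "outR (anti_twin_arcs A) (fl p) = inR (anti_twin_arcs A) p"
  by (cases p) (auto simp: outR_def inR_def fl_def at_char)

lemma in_fl: "inR (anti_twin_arcs A) (fl p) = outR (anti_twin_arcs A) p"
  by (cases p) (auto simp: outR_def inR_def fl_def at_char)

lemma fl_fl[simp]: "fl (fl p) = p" by (simp add: fl_def)

lemma tw_fl: "tw (anti_twin_arcs A) p q \<Longrightarrow> tw (anti_twin_arcs A) (fl p) (fl q)"
  unfolding tw_def by (simp add: out_fl in_fl)

lemma isoR_fl: "isoR (anti_twin_arcs A) (fl p) \<longleftrightarrow> isoR (anti_twin_arcs A) p"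
  unfolding isoR_def by (auto simp add: out_fl in_fl)

lemma isoR_T: "isoR (anti_twin_arcs A) (x,b) \<longleftrightarrow> isoR (anti_twin_arcs A) (x,True)"
  using isoR_fl[of A "(x,True)"] by (cases b) (auto simp: fl_def)

lemma nonflip:
  assumes "oriented_graph V A" "tw (anti_twin_arcs A) p (fl p)"
  shows "isoR (anti_twin_arcs A) p"
proof -
  have "outR (anti_twin_arcs A) p = inR (anti_twin_arcs A) p"
    using assms(2) by (simp add: tw_def out_fl)
  moreover have "\<not> ((p,q) \<in> anti_twin_arcs A \<and> (q,p) \<in> anti_twin_arcs A)" for q
    using assms(1) by (cases p; cases q; auto simp: at_char oriented_graph_def)
  ultimately show ?thesis unfolding isoR_def outR_def inR_def by blast
qed

lemma at_sub: "oriented_graph V A \<Longrightarrow> anti_twin_arcs A \<subseteq> anti_twin_vertices V \<times> anti_twin_vertices V"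
  by (auto simp: anti_twin_arcs_def anti_twin_vertices_def oriented_graph_def)

lemma iso_out:
  assumes "is_iso U E U' E' f" "E \<subseteq> U \<times> U" "E' \<subseteq> U' \<times> U'" "p \<in> U"
  shows "f ` outR E p = outR E' (f p)" "f ` inR E p = inR E' (f p)"
proof -
  have b: "bij_betw f U U'" and e: "\<forall>x\<in>U. \<forall>y\<in>U. (x,y)\<in>E \<longleftrightarrow> (f x, f y)\<in>E'"
    using assms(1) by (auto simp: is_iso_def)
  show "f ` outR E p = outR E' (f p)"
  proof
    show "f ` outR E p \<subseteq> outR E' (f p)" using e assms(2,4) by (auto simp: outR_def)
    show "outR E' (f p) \<subseteq> f ` outR E p"
    proof
      fix q' assume "q' \<in> outR E' (f p)"
      then have q': "(f p, q') \<in> E'" "q' \<in> U'" using assms(3) by (auto simp: outR_def)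
      then obtain q where "q \<in> U" "q' = f q" using b by (auto simp: bij_betw_def)
      then show "q' \<in> f ` outR E p" using e q' assms(4) by (auto simp: outR_def)
    qed
  qed
  show "f ` inR E p = inR E' (f p)"
  proof
    show "f ` inR E p \<subseteq> inR E' (f p)" using e assms(2,4) by (auto simp: inR_def)
    show "inR E' (f p) \<subseteq> f ` inR E p"
    proof
      fix q' assume "q' \<in> inR E' (f p)"
      then have q': "(q', f p) \<in> E'" "q' \<in> U'" using assms(3) by (auto simp: inR_def)
      then obtain q where "q \<in> U" "q' = f q" using b by (auto simp: bij_betw_def)
      then show "q' \<in> f ` inR E p" using e q' assms(4) by (auto simp: inR_def)
    qed
  qed
qed

lemma iso_tw:
  assumes "is_iso U E U' E' f" "E \<subseteq> U \<times> U" "E' \<subseteq> U' \<times> U'" "p \<in> U" "q \<in> U"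
  shows "tw E p q \<longleftrightarrow> tw E' (f p) (f q)"
proof -
  have inj: "inj_on f U" using assms(1) by (auto simp: is_iso_def bij_betw_def)
  have s: "outR E p \<subseteq> U" "outR E q \<subseteq> U" "inR E p \<subseteq> U" "inR E q \<subseteq> U"
    using assms(2) by (auto simp: outR_def inR_def)
  show ?thesis
    unfolding tw_def iso_out[OF assms(1-4), symmetric] iso_out[OF assms(1-3) assms(5), symmetric]
    using inj_on_image_eq_iff[OF inj s(1,2)] inj_on_image_eq_iff[OF inj s(3,4)] by simp
qed

lemma iso_isoR:
  assumes "is_iso U E U' E' f" "E \<subseteq> U \<times> U" "E' \<subseteq> U' \<times> U'" "p \<in> U"
  shows "isoR E p \<longleftrightarrow> isoR E' (f p)"
  unfolding isoR_def iso_out[OF assms, symmetric] by simp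

definition pushS :: "'a set \<Rightarrow> ('a \<times> 'a) set \<Rightarrow> ('a \<times> 'a) set" where
  "pushS S A = {(x,y). if (x \<in> S) = (y \<in> S) then (x,y) \<in> A else (y,x) \<in> A}"

lemma pushS_iff: "(x,y) \<in> pushS S A \<longleftrightarrow> (if (x \<in> S) = (y \<in> S) then (x,y) \<in> A else (y,x) \<in> A)"
  by (simp add: pushS_def)

lemma pushS_rel: "finite S \<Longrightarrow> S \<subseteq> V \<Longrightarrow> push_related V A (pushS S A)"
proof (induction S rule: finite_induct)
  case empty
  have "pushS {} A = A" by (auto simp: pushS_def)
  then show ?case by (simp add: push_related_def)
next
  case (insert v S)
  have "pushS (insert v S) A = push v (pushS S A)"
  proof (intro set_eqI)
    fix p :: "'a \<times> 'a"
    show "p \<in> pushS (insert v S) A \<longleftrightarrow> p \<in> push v (pushS S A)"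
      using insert(2) by (cases p) (auto simp only: pushS_iff push_iff insert_iff split: if_splits)
  qed
  with insert show ?case unfolding push_related_def
    by (auto intro: rtranclp.rtrancl_into_rtrancl)
qed


locale bw =
  fixes V :: "'a set" and A :: "('a \<times> 'a) set" and W :: "'b set" and B :: "('b \<times> 'b) set"
    and f :: "'a \<times> bool \<Rightarrow> 'b \<times> bool"
  assumes finV: "finite V" and ogA: "oriented_graph V A"
    and finW: "finite W" and ogB: "oriented_graph W B"
    and fiso: "is_iso (anti_twin_vertices V) (anti_twin_arcs A) (anti_twin_vertices W) (anti_twin_arcs B) f"
begin

abbreviation "EA \<equiv> anti_twin_arcs A"
abbreviation "EB \<equiv> anti_twin_arcs B"

lemma fbij: "bij_betw f (V \<times> UNIV) (W \<times> UNIV)"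
  using fiso by (simp add: is_iso_def anti_twin_vertices_def)

lemma fin: "x \<in> V \<Longrightarrow> f (x,b) \<in> W \<times> UNIV"
  using fbij by (auto dest: bij_betw_apply)

lemma f_tw: "x \<in> V \<Longrightarrow> y \<in> V \<Longrightarrow> tw EA (x,b) (y,c) \<longleftrightarrow> tw EB (f (x,b)) (f (y,c))"
  by (rule iso_tw[OF fiso at_sub[OF ogA] at_sub[OF ogB]]) (auto simp: anti_twin_vertices_def)

lemma f_isoR: "x \<in> V \<Longrightarrow> isoR EA (x,b) \<longleftrightarrow> isoR EB (f (x,b))"
  by (rule iso_isoR[OF fiso at_sub[OF ogA] at_sub[OF ogB]]) (auto simp: anti_twin_vertices_def)

lemma f_arc: "x \<in> V \<Longrightarrow> y \<in> V \<Longrightarrow> ((x,b),(y,c)) \<in> EA \<longleftrightarrow> (f (x,b), f (y,c)) \<in> EB"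
  using fiso by (auto simp: is_iso_def anti_twin_vertices_def)

lemma f_fl: assumes "x \<in> V" shows "tw EB (f (fl (x,b))) (fl (f (x,b)))"
proof -
  have U: "(x,b) \<in> anti_twin_vertices V" "fl (x,b) \<in> anti_twin_vertices V"
    using assms by (auto simp: anti_twin_vertices_def fl_def)
  note io = iso_out[OF fiso at_sub[OF ogA] at_sub[OF ogB]]
  show ?thesis unfolding tw_def
    using io(1)[OF U(2)] io(2)[OF U(2)] io(1)[OF U(1)] io(2)[OF U(1)]
    by (simp add: out_fl in_fl)
qed

definition "IV = {x \<in> V. isoR EA (x,True)}"
definition "IW = {w \<in> W. isoR EB (w,True)}"

lemma card_I: "card IV = card IW"
proof -
  have "f ` (IV \<times> UNIV) = IW \<times> UNIV"
  proof
    show "f ` (IV \<times> UNIV) \<subseteq> IW \<times> UNIV"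
    proof
      fix q assume "q \<in> f ` (IV \<times> UNIV)"
      then obtain x b where x: "x \<in> IV" "q = f (x,b)" by auto
      then have "x \<in> V" "isoR EA (x,b)" using isoR_T[of A x b] by (auto simp: IV_def)
      then show "q \<in> IW \<times> UNIV" using x fin[of x b] f_isoR[of x b]
        by (cases q) (auto simp: IW_def dest: isoR_T[THEN iffD1])
    qed
    show "IW \<times> UNIV \<subseteq> f ` (IV \<times> UNIV)"
    proof
      fix q :: "'b \<times> bool" assume q: "q \<in> IW \<times> UNIV"
      then have "q \<in> W \<times> UNIV" by (auto simp: IW_def)
      then obtain p where p: "p \<in> V \<times> UNIV" "q = f p" using fbij unfolding bij_betw_def by (metis imageE)
      obtain x b where xb: "p = (x,b)" by (cases p)
      have "isoR EB q" using q by (cases q) (auto simp: IW_def dest: isoR_T[THEN iffD2])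
      then have "isoR EA (x,b)" using f_isoR[of x b] p xb by auto
      then show "q \<in> f ` (IV \<times> UNIV)" using p xb by (auto simp: IV_def dest: isoR_T[THEN iffD1])
    qed
  qed
  moreover have "inj_on f (IV \<times> UNIV)"
    using fbij by (rule inj_on_subset[OF bij_betw_imp_inj_on]) (auto simp: IV_def)
  ultimately have "card (IV \<times> (UNIV::bool set)) = card (IW \<times> (UNIV::bool set))"
    by (metis card_image)
  then show ?thesis by (simp add: card_cartesian_product)
qed

lemma tw_T: "tw EA (x,b) (y,c) \<Longrightarrow> tw EA (x,b') (y, if b = b' then c else \<not> c)"
  using tw_fl[of A "(x,b)" "(y,c)"] by (cases "b = b'") (auto simp: fl_def)

lemma side:
  assumes "\<not> isoR EA (z,e)" "tw EA (z,e) (r,d0)"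
  shows "tw EA (z,True) (r,True) \<longleftrightarrow> (e \<longleftrightarrow> d0)"
proof -
  have 1: "tw EA (z,True) (r, if e = True then d0 else \<not> d0)" using tw_T[OF assms(2)] .
  have ni: "\<not> isoR EA (z,True)" using assms(1) isoR_T[of A z e] by simp
  have "\<not> (tw EA (z,True) (r,True) \<and> tw EA (z,True) (r,False))"
  proof
    assume a: "tw EA (z,True) (r,True) \<and> tw EA (z,True) (r,False)"
    then have "tw EA (r,True) (fl (r,True))" by (auto simp: tw_def fl_def)
    then have "isoR EA (r,True)" by (rule nonflip[OF ogA])
    then show False using a ni tw_isoR by metis
  qed
  then show ?thesis using 1 by (cases e; cases d0) auto
qed

definition "rep x = (SOME r. r \<in> V \<and> (\<exists>d. tw EA (x,True) (r,d)))"
definition "sg x = tw EA (x,True) (rep x, True)"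

lemma s_key:
  assumes "x \<in> V" "y \<in> V" "\<not> isoR EA (x,b)" "tw EA (x,b) (y,c)"
  shows "b = sg x \<longleftrightarrow> c = sg y"
proof -
  obtain c' where c': "tw EA (x,True) (y,c')" using tw_T[OF assms(4)] by blast
  have eqP: "(\<exists>d. tw EA (x,True) (r,d)) \<longleftrightarrow> (\<exists>d. tw EA (y,True) (r,d))" for r
  proof
    assume "\<exists>d. tw EA (x,True) (r,d)"
    then obtain d where "tw EA (y,c') (r,d)" using c' by (auto simp: tw_def)
    then show "\<exists>d. tw EA (y,True) (r,d)" using tw_T by blast
  next
    assume "\<exists>d. tw EA (y,True) (r,d)"
    then obtain d where d: "tw EA (y,True) (r,d)" by blast
    then have "tw EA (y,c') (r, if True = c' then d else \<not> d)" by (rule tw_T)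
    then show "\<exists>d. tw EA (x,True) (r,d)" using c' by (auto simp: tw_def)
  qed
  have rr: "rep x = rep y" unfolding rep_def using eqP by simp
  have "rep x \<in> V \<and> (\<exists>d. tw EA (x,True) (rep x,d))"
    unfolding rep_def by (rule someI[of _ x]) (auto simp: assms(1) tw_def)
  then obtain d where "tw EA (x,True) (rep x,d)" by blast
  then obtain d0 where d0: "tw EA (x,b) (rep x,d0)" using tw_T by blast
  then have d0y: "tw EA (y,c) (rep x,d0)" using assms(4) by (auto simp: tw_def)
  have niy: "\<not> isoR EA (y,c)" using assms(3,4) tw_isoR by metis
  have "sg x \<longleftrightarrow> (b \<longleftrightarrow> d0)" unfolding sg_def using side[OF assms(3) d0] .
  moreover have "sg y \<longleftrightarrow> (c \<longleftrightarrow> d0)" unfolding sg_def rr[symmetric] using side[OF niy d0y] .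
  ultimately show ?thesis by auto
qed

lemma niA: "x \<in> V \<Longrightarrow> x \<notin> IV \<Longrightarrow> \<not> isoR EA (x,b)"
  using isoR_T[of A x b] by (auto simp: IV_def)
lemma isA: "x \<in> IV \<Longrightarrow> isoR EA (x,b)"
  using isoR_T[of A x b] by (auto simp: IV_def)
lemma niB: "w \<in> W \<Longrightarrow> w \<notin> IW \<Longrightarrow> \<not> isoR EB (w,b)"
  using isoR_T[of B w b] by (auto simp: IW_def)
lemma isB: "w \<in> IW \<Longrightarrow> isoR EB (w,b)"
  using isoR_T[of B w b] by (auto simp: IW_def)

lemma fst_ni: assumes "x \<in> V" "x \<notin> IV" shows "fst (f (x,b)) \<in> W - IW"
proof -
  obtain w d where wd: "f (x,b) = (w,d)" by (cases "f (x,b)")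
  have "w \<in> W" using fin[OF assms(1), of b] wd by auto
  moreover have "\<not> isoR EB (w,d)" using f_isoR[OF assms(1), of b] niA[OF assms] wd by simp
  ultimately show ?thesis using wd isB by fastforce
qed

lemma result: "push_equivalent V A W B"
proof -
  have "finite IV" "finite IW" using finV finW by (auto simp: IV_def IW_def)
  then obtain g where g: "bij_betw g IV IW" using finite_same_card_bij card_I by blast
  define h where "h x = (if x \<in> IV then g x else fst (f (x, sg x)))" for x
  define c where "c x = (if x \<in> IV then False else (snd (f (x, sg x)) \<noteq> sg x))" for x
  have P1: "tw EB (h x, b \<noteq> c x) (f (x,b))" if x: "x \<in> V" for x b
  proof (cases "x \<in> IV")
    case True
    then have "isoR EB (h x, b \<noteq> c x)" using g isB by (auto simp: h_def c_def dest: bij_betw_apply)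
    moreover have "isoR EB (f (x,b))" using f_isoR[OF x] isA[OF True] by simp
    ultimately show ?thesis by (simp add: isoR_def tw_def)
  next
    case False
    obtain w d where wd: "f (x, sg x) = (w,d)" by (cases "f (x, sg x)")
    show ?thesis
    proof (cases "b = sg x")
      case True
      then show ?thesis using False wd by (auto simp: h_def c_def tw_def)
    next
      case b: False
      have "tw EB (f (fl (x, sg x))) (fl (f (x, sg x)))" by (rule f_fl[OF x])
      moreover have "fl (x, sg x) = (x,b)" using b by (auto simp: fl_def)
      moreover have "fl (f (x, sg x)) = (h x, b \<noteq> c x)" using b False wd by (auto simp: h_def c_def fl_def)
      ultimately show ?thesis by (auto simp: tw_def)
    qed
  qed
  have P2: "h x \<in> W" if "x \<in> V" for x
    using that g fin[OF that, of "sg x"] by (cases "f (x, sg x)") (auto simp: h_def IW_def dest: bij_betw_apply)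
  have P3: "inj_on h V"
  proof (rule inj_onI)
    fix x y assume x: "x \<in> V" and y: "y \<in> V" and e: "h x = h y"
    show "x = y"
    proof (cases "x \<in> IV"; cases "y \<in> IV")
      assume "x \<in> IV" "y \<in> IV" then show ?thesis using e g by (auto simp: h_def bij_betw_def inj_on_def)
    next
      assume a: "x \<in> IV" "y \<notin> IV"
      then show ?thesis using e g fst_ni[OF y a(2)] by (auto simp: h_def dest: bij_betw_apply)
    next
      assume a: "x \<notin> IV" "y \<in> IV"
      then have "g y \<in> IW" "fst (f (x, sg x)) \<notin> IW" using g fst_ni[OF x a(1)] by (auto dest: bij_betw_apply)
      then show ?thesis using e a by (simp add: h_def)
    next
      assume a: "x \<notin> IV" "y \<notin> IV"
      obtain w d where wd: "f (x, sg x) = (w,d)" by (cases "f (x, sg x)")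
      obtain w' d' where wd': "f (y, sg y) = (w',d')" by (cases "f (y, sg y)")
      have ww: "w = w'" using e a wd wd' by (simp add: h_def)
      show ?thesis
      proof (cases "d = d'")
        case True
        then have "f (x, sg x) = f (y, sg y)" using wd wd' ww by simp
        moreover have "inj_on f (V \<times> UNIV)" using fbij by (simp add: bij_betw_def)
        ultimately show ?thesis using x y by (auto simp: inj_on_def)
      next
        case False
        have "tw EB (f (fl (x, sg x))) (fl (f (x, sg x)))" by (rule f_fl[OF x])
        moreover have "fl (f (x, sg x)) = f (y, sg y)" using wd wd' ww False by (auto simp: fl_def)
        moreover have "fl (x, sg x) = (x, \<not> sg x)" by (simp add: fl_def)
        ultimately have "tw EB (f (x, \<not> sg x)) (f (y, sg y))" by simp
        then have "tw EA (x, \<not> sg x) (y, sg y)" using f_tw[OF x y] by simp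
        from s_key[OF x y niA[OF x a(1)] this] show ?thesis by simp
      qed
    qed
  qed
  have P4: "W \<subseteq> h ` V"
  proof
    fix w assume w: "w \<in> W"
    show "w \<in> h ` V"
    proof (cases "w \<in> IW")
      case True
      then obtain x where "x \<in> IV" "w = g x" using g by (auto simp: bij_betw_def)
      then show ?thesis by (auto simp: h_def IV_def)
    next
      case False
      obtain x b where xb: "x \<in> V" "f (x,b) = (w,True)"
        using w fbij unfolding bij_betw_def by (metis (no_types, lifting) SigmaE UNIV_I imageE mem_Sigma_iff)
      have xn: "x \<notin> IV" using fst_ni isA xb False f_isoR w niB by metis
      show ?thesis
      proof (cases "b = sg x")
        case True then show ?thesis using xb xn by (auto simp: h_def image_iff intro!: bexI[of _ x])
      next
        case b: False
        have "fl (x,b) = (x, sg x)" using b by (simp add: fl_def)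
        then have t1: "tw EB (f (x, sg x)) (w, False)" using f_fl[OF xb(1), of b] xb(2) by (simp add: fl_def)
        obtain y d where yd: "y \<in> V" "f (y,d) = (w,False)"
          using w fbij unfolding bij_betw_def by (metis (no_types, lifting) SigmaE UNIV_I imageE mem_Sigma_iff)
        have "tw EA (x, sg x) (y, d)" using f_tw[OF xb(1) yd(1)] t1 yd(2) by simp
        from s_key[OF xb(1) yd(1) niA[OF xb(1) xn] this] have dd: "d = sg y" by simp
        have yn: "y \<notin> IV" using fst_ni isA yd False f_isoR w niB by metis
        have "h y = w" using yd dd yn by (simp add: h_def)
        then show ?thesis using yd by blast
      qed
    qed
  qed
  have bij: "bij_betw h V W" using P2 P3 P4 by (auto simp: bij_betw_def)
  let ?S = "{x \<in> V. c x}"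
  have P5: "(x,y) \<in> pushS ?S A \<longleftrightarrow> (h x, h y) \<in> B" if x: "x \<in> V" and y: "y \<in> V" for x y
  proof -
    have key: "((x,b),(y,d)) \<in> EA \<longleftrightarrow> ((h x, b \<noteq> c x), (h y, d \<noteq> c y)) \<in> EB" for b d
      using f_arc[OF x y] tw_arc[OF P1[OF x] P1[OF y]] by simp
    show ?thesis using key[of True True] key[of True False] x y
      by (auto simp: at_char pushS_iff split: if_splits)
  qed
  have "push_related V A (pushS ?S A)" by (rule pushS_rel) (use finV in auto)
  moreover have "isomorphic V (pushS ?S A) W B"
    unfolding isomorphic_def is_iso_def using bij P5 by blast
  ultimately show ?thesis unfolding push_equivalent_def by blast
qed

end


theorem theorem1:
  fixes V :: "'a set" and A :: "('a \<times> 'a) set"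
    and W :: "'b set" and B :: "('b \<times> 'b) set"
  assumes "finite V" and "oriented_graph V A"
    and "finite W" and "oriented_graph W B"
  shows "push_equivalent V A W B \<longleftrightarrow>
         isomorphic (anti_twin_vertices V) (anti_twin_arcs A)
                    (anti_twin_vertices W) (anti_twin_arcs B)"
proof
  assume "push_equivalent V A W B"
  then obtain A' h where p: "push_related V A A'" and i: "is_iso V A' W B h"
    by (auto simp: push_equivalent_def isomorphic_def)
  obtain k where "is_iso (anti_twin_vertices V) (anti_twin_arcs A) (anti_twin_vertices V) (anti_twin_arcs A') k"
    using fwd_push[OF p] by (auto simp: isomorphic_def)
  from is_iso_trans[OF this fwd_iso[OF i]] show "isomorphic (anti_twin_vertices V) (anti_twin_arcs A)
                    (anti_twin_vertices W) (anti_twin_arcs B)" unfolding isomorphic_def by blast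
next
  assume "isomorphic (anti_twin_vertices V) (anti_twin_arcs A) (anti_twin_vertices W) (anti_twin_arcs B)"
  then obtain f where "is_iso (anti_twin_vertices V) (anti_twin_arcs A) (anti_twin_vertices W) (anti_twin_arcs B) f"
    by (auto simp: isomorphic_def)
  then interpret bw V A W B f using assms by unfold_locales
  show "push_equivalent V A W B" by (rule result)
qed

end
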